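(* Let $\tau:\mathcal A\to\mathcal A^+$ be a substitution satisfying the standing assumptions below, with a generating fixed point $u=u_0u_1u_2\ldots$. For a letter $a\in\mathcal A$, the sequence $au=au_0u_1u_2\ldots$ belongs to $X_\tau$ if and only if $a$ is part of a suffix cycle $a_1,a_2,\ldots,a_m$ such that $a_iu_0\in\mathcal L_\tau$ for some $i\in\{1,\ldots,m\}$.
   Context: $\mathcal A$ is a finite alphabet, $\mathcal A^+$ the finite words over it. A substitution $\tau$ is extended to words and one-sided sequences by concatenation. The language $\mathcal L_\tau$ is the set of all finite subwords of the words $\tau^n(a)$, $n\ge1$, $a\in\mathcal A$. A fixed point is $u\in\mathcal A^{\mathbb N}$ with $\tau(u)=u$; it is generating if its set of finite subwords is $\mathcal L_\tau$. $\sigma$ is the left shift and $X_\tau$ is the closure of $\{\sigma^n(u):n\ge0\}$ in $\mathcal A^{\mathbb N}$. Letters $a_1,\ldots,a_m$ form a suffix cycle if the last letter of $\tau(a_i)$ is $a_{i+1}$ for $1\le i<m$ and the last letter of $\tau(a_m)$ is $a_1$; $a$ is part of it if $a\in\{a_1,\ldots,a_m\}$. Standing assumptions: $\tau$ is primitive, $X_\tau$ is aperiodic (infinite), $\tau$ is unilaterally recognizable (with $E=\{0\}\cup\{|\tau(u_0\cdots u_{p-1})|:p>0\}$ there is $L$ such that $u_{[i,i+L-1]}=u_{[j,j+L-1]}$ and $i\in E$ imply $j\in E$), and every power $\tau^n$ is injective on letters. *)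

theory Defs
  imports Main "HOL-Library.Sublist"
begin

text \<open>A substitution is a map tau :: 'a => 'a list (images nonempty, imposed as hypothesis);
  the alphabet is the finite type 'a.  One-sided sequences are functions nat => 'a.\<close>

definition subst_word :: "('a \<Rightarrow> 'a list) \<Rightarrow> 'a list \<Rightarrow> 'a list" where
  "subst_word \<tau> w = concat (map \<tau> w)"

definition subst_pow :: "('a \<Rightarrow> 'a list) \<Rightarrow> nat \<Rightarrow> 'a \<Rightarrow> 'a list" where
  "subst_pow \<tau> n a = (subst_word \<tau> ^^ n) [a]"

text \<open>Extension of tau to one-sided sequences by concatenation (valid for nonempty images:
  the n-th letter of tau(x) is determined by tau(x_0 ... x_n)).\<close>
definition subst_seq :: "('a \<Rightarrow> 'a list) \<Rightarrow> (nat \<Rightarrow> 'a) \<Rightarrow> (nat \<Rightarrow> 'a)" where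
  "subst_seq \<tau> x n = subst_word \<tau> (map x [0..<Suc n]) ! n"

definition lang :: "('a \<Rightarrow> 'a list) \<Rightarrow> 'a list set" where
  "lang \<tau> = {w. \<exists>n\<ge>1. \<exists>a. sublist w (subst_pow \<tau> n a)}"

definition seq_factors :: "(nat \<Rightarrow> 'a) \<Rightarrow> 'a list set" where
  "seq_factors x = {map x [i..<i+k] | i k. True}"

definition fixed_point :: "('a \<Rightarrow> 'a list) \<Rightarrow> (nat \<Rightarrow> 'a) \<Rightarrow> bool" where
  "fixed_point \<tau> u \<longleftrightarrow> subst_seq \<tau> u = u"

definition generating_fixed_point :: "('a \<Rightarrow> 'a list) \<Rightarrow> (nat \<Rightarrow> 'a) \<Rightarrow> bool" where
  "generating_fixed_point \<tau> u \<longleftrightarrow> fixed_point \<tau> u \<and> seq_factors u = lang \<tau>"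

definition shift :: "(nat \<Rightarrow> 'a) \<Rightarrow> (nat \<Rightarrow> 'a)" where
  "shift x n = x (Suc n)"

text \<open>X_tau: closure of the shift orbit of u in A^N with the product of discrete topologies.
  Unfolded via the cylinder-set basis: x is in the closure iff every cylinder
  [x_0 ... x_(n-1)] contains some shift^k(u).\<close>
definition X_tau :: "(nat \<Rightarrow> 'a) \<Rightarrow> (nat \<Rightarrow> 'a) set" where
  "X_tau u = {x. \<forall>n. \<exists>k. \<forall>i<n. x i = (shift ^^ k) u i}"

definition primitive :: "('a \<Rightarrow> 'a list) \<Rightarrow> bool" where
  "primitive \<tau> \<longleftrightarrow> (\<exists>n\<ge>1. \<forall>a b. b \<in> set (subst_pow \<tau> n a))"

definition cut_set :: "('a \<Rightarrow> 'a list) \<Rightarrow> (nat \<Rightarrow> 'a) \<Rightarrow> nat set" where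
  "cut_set \<tau> u = {0} \<union> {length (subst_word \<tau> (map u [0..<p])) | p. p > 0}"

definition unilaterally_recognizable :: "('a \<Rightarrow> 'a list) \<Rightarrow> (nat \<Rightarrow> 'a) \<Rightarrow> bool" where
  "unilaterally_recognizable \<tau> u \<longleftrightarrow>
     (\<exists>L. \<forall>i j. (\<forall>k<L. u (i + k) = u (j + k)) \<and> i \<in> cut_set \<tau> u \<longrightarrow> j \<in> cut_set \<tau> u)"

definition suffix_cycle :: "('a \<Rightarrow> 'a list) \<Rightarrow> 'a list \<Rightarrow> bool" where
  "suffix_cycle \<tau> cyc \<longleftrightarrow> cyc \<noteq> [] \<and>
     (\<forall>i. Suc i < length cyc \<longrightarrow> last (\<tau> (cyc ! i)) = cyc ! Suc i) \<and>
     last (\<tau> (last cyc)) = hd cyc"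

definition prepend :: "'a \<Rightarrow> (nat \<Rightarrow> 'a) \<Rightarrow> (nat \<Rightarrow> 'a)" where
  "prepend a x n = (case n of 0 \<Rightarrow> a | Suc k \<Rightarrow> x k)"

end

theory Submission
  imports Defs
begin

lemma upt_split3: "a \<le> b \<Longrightarrow> b \<le> c \<Longrightarrow> [a..<c] = [a..<b] @ [b..<c]"
  using upt_add_eq_append[of a b "c - b"] by simp

lemma sw_append: "subst_word \<tau> (x @ y) = subst_word \<tau> x @ subst_word \<tau> y"
  by (simp add: subst_word_def)

lemma sw_Nil[simp]: "subst_word \<tau> [] = []"
  by (simp add: subst_word_def)

lemma sw_Cons[simp]: "subst_word \<tau> (x # w) = \<tau> x @ subst_word \<tau> w"
  by (simp add: subst_word_def)

lemma sw_single[simp]: "subst_word \<tau> [x] = \<tau> x"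
  by (simp add: subst_word_def)

lemma sw_len: "\<forall>b. \<tau> b \<noteq> [] \<Longrightarrow> length (subst_word \<tau> w) \<ge> length w"
proof (induction w)
  case Nil then show ?case by simp
next
  case (Cons a w)
  have "length (\<tau> a) \<ge> 1" using Cons.prems by (metis One_nat_def Suc_leI length_greater_0_conv)
  then show ?case using Cons by (simp add: subst_word_def)
qed

lemma swpow_append: "(subst_word \<tau> ^^ n) (x @ y) = (subst_word \<tau> ^^ n) x @ (subst_word \<tau> ^^ n) y"
  by (induction n) (auto simp: sw_append)

lemma swpow_len: "\<forall>b. \<tau> b \<noteq> [] \<Longrightarrow> length ((subst_word \<tau> ^^ n) w) \<ge> length w"
proof (induction n)
  case 0 then show ?case by simp
next
  case (Suc n)
  have "length ((subst_word \<tau> ^^ n) w) \<le> length (subst_word \<tau> ((subst_word \<tau> ^^ n) w))"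
    by (rule sw_len[OF Suc.prems])
  then show ?case using Suc by simp
qed

lemma sw_last: "\<forall>b. \<tau> b \<noteq> [] \<Longrightarrow> w \<noteq> [] \<Longrightarrow>
   subst_word \<tau> w \<noteq> [] \<and> last (subst_word \<tau> w) = last (\<tau> (last w))"
proof -
  assume ne: "\<forall>b. \<tau> b \<noteq> []" and w: "w \<noteq> []"
  then have "w = butlast w @ [last w]" by simp
  then have "subst_word \<tau> w = subst_word \<tau> (butlast w) @ \<tau> (last w)"
    by (metis sw_append sw_single)
  then show ?thesis using ne by simp
qed

lemma swpow_last: "\<forall>b. \<tau> b \<noteq> [] \<Longrightarrow>
   (subst_word \<tau> ^^ n) [c] \<noteq> [] \<and> last ((subst_word \<tau> ^^ n) [c]) = ((\<lambda>b. last (\<tau> b)) ^^ n) c"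
proof (induction n)
  case 0 then show ?case by simp
next
  case (Suc n)
  then show ?case using sw_last[OF Suc.prems, of "(subst_word \<tau> ^^ n) [c]"] by simp
qed

lemma shift_pow: "(shift ^^ k) u i = u (i + k)"
  by (induction k arbitrary: i) (auto simp: shift_def)

definition cpos :: "('a \<Rightarrow> 'a list) \<Rightarrow> (nat \<Rightarrow> 'a) \<Rightarrow> nat \<Rightarrow> nat" where
  "cpos \<tau> u p = length (subst_word \<tau> (map u [0..<p]))"

lemma fp_nth:
  assumes fp: "fixed_point \<tau> u" and ne: "\<forall>b. \<tau> b \<noteq> []"
    and i: "i < length (subst_word \<tau> (map u [0..<p]))"
  shows "subst_word \<tau> (map u [0..<p]) ! i = u i"
proof -
  have ui: "u i = subst_word \<tau> (map u [0..<Suc i]) ! i"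
    using fun_cong[OF fp[unfolded fixed_point_def], of i] unfolding subst_seq_def by (rule sym)
  show ?thesis
  proof (cases "Suc i \<le> p")
    case True
    then have "map u [0..<p] = map u [0..<Suc i] @ map u [Suc i..<p]"
      using upt_split3[of 0 "Suc i" p] by simp
    then have "subst_word \<tau> (map u [0..<p]) = subst_word \<tau> (map u [0..<Suc i]) @ subst_word \<tau> (map u [Suc i..<p])"
      by (simp add: sw_append)
    moreover have "length (subst_word \<tau> (map u [0..<Suc i])) > i"
      using sw_len[OF ne, of "map u [0..<Suc i]"] by simp
    ultimately show ?thesis using ui by (simp del: upt_Suc add: nth_append)
  next
    case False
    then have "map u [0..<Suc i] = map u [0..<p] @ map u [p..<Suc i]"
      using upt_split3[of 0 p "Suc i"] by simp
    then have "subst_word \<tau> (map u [0..<Suc i]) = subst_word \<tau> (map u [0..<p]) @ subst_word \<tau> (map u [p..<Suc i])"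
      by (simp add: sw_append)
    then show ?thesis using ui i by (simp del: upt_Suc add: nth_append)
  qed
qed

lemma fp_prefix:
  assumes fp: "fixed_point \<tau> u" and ne: "\<forall>b. \<tau> b \<noteq> []"
  shows "subst_word \<tau> (map u [0..<p]) = map u [0..<cpos \<tau> u p]"
  by (rule nth_equalityI) (auto simp: cpos_def fp_nth[OF fp ne])

lemma cpos_0[simp]: "cpos \<tau> u 0 = 0"
  by (simp add: cpos_def)

lemma cpos_Suc: "cpos \<tau> u (Suc p) = cpos \<tau> u p + length (\<tau> (u p))"
  by (simp add: cpos_def sw_append)

lemma cpos_mono:
  assumes ne: "\<forall>b. \<tau> b \<noteq> []"
  shows "strict_mono (cpos \<tau> u)"
  unfolding strict_mono_Suc_iff using ne by (simp add: cpos_Suc)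

lemma cpos_ge: "\<forall>b. \<tau> b \<noteq> [] \<Longrightarrow> cpos \<tau> u p \<ge> p"
  unfolding cpos_def using sw_len[of \<tau> "map u [0..<p]"] by simp

lemma tau_block:
  assumes fp: "fixed_point \<tau> u" and ne: "\<forall>b. \<tau> b \<noteq> []"
  shows "\<tau> (u s) = map u [cpos \<tau> u s..<cpos \<tau> u (Suc s)]"
proof -
  have le: "cpos \<tau> u s \<le> cpos \<tau> u (Suc s)" by (simp add: cpos_Suc)
  have "map u [0..<cpos \<tau> u (Suc s)] = subst_word \<tau> (map u [0..<Suc s])"
    using fp_prefix[OF fp ne] by metis
  also have "\<dots> = map u [0..<cpos \<tau> u s] @ \<tau> (u s)"
    using fp_prefix[OF fp ne, of s] by (simp add: sw_append)
  finally have "map u [0..<cpos \<tau> u s] @ map u [cpos \<tau> u s..<cpos \<tau> u (Suc s)] = map u [0..<cpos \<tau> u s] @ \<tau> (u s)"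
    using upt_split3[OF _ le, of 0] by simp
  then show ?thesis by simp
qed

lemma cut_set_range: "cut_set \<tau> u = range (cpos \<tau> u)"
proof -
  have "cut_set \<tau> u = {0} \<union> {cpos \<tau> u p |p. 0 < p}"
    unfolding cut_set_def cpos_def by simp
  also have "\<dots> = range (cpos \<tau> u)"
  proof
    show "{0} \<union> {cpos \<tau> u p |p. 0 < p} \<subseteq> range (cpos \<tau> u)"
      by (auto intro: range_eqI[of 0 "cpos \<tau> u" 0])
    show "range (cpos \<tau> u) \<subseteq> {0} \<union> {cpos \<tau> u p |p. 0 < p}"
    proof
      fix x assume "x \<in> range (cpos \<tau> u)"
      then obtain p where "x = cpos \<tau> u p" by blast
      then show "x \<in> {0} \<union> {cpos \<tau> u p |p. 0 < p}"
        by (cases p) auto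
    qed
  qed
  finally show ?thesis .
qed


lemma X_iff: "x \<in> X_tau u \<longleftrightarrow> (\<forall>n. \<exists>k. \<forall>i<n. x i = u (i + k))"
  unfolding X_tau_def by (simp add: shift_pow)

lemma desub_S:
  assumes ne: "\<forall>b. \<tau> b \<noteq> []" and fp: "fixed_point \<tau> u"
    and recL: "\<forall>i j. (\<forall>k<L. u (i + k) = u (j + k)) \<and> i \<in> cut_set \<tau> u \<longrightarrow> j \<in> cut_set \<tau> u"
    and injt: "inj \<tau>"
    and cX: "prepend c u \<in> X_tau u"
  shows "\<exists>b q. last (\<tau> b) = c \<and> (\<forall>i<S. prepend b u i = u (i + q))"
proof -
  define e where "e = cpos \<tau> u"
  have sm: "strict_mono e" unfolding e_def by (rule cpos_mono[OF ne])
  have rec: "\<And>i j. (\<forall>k<L. u (i + k) = u (j + k)) \<Longrightarrow> i \<in> range e \<Longrightarrow> j \<in> range e"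
    using recL unfolding cut_set_range e_def by blast
  define M where "M = e S + L"
  obtain k where k: "\<forall>i<Suc M. prepend c u i = u (i + k)"
    using cX unfolding X_iff by blast
  define j where "j = Suc k"
  have ck: "c = u k" using k[rule_format, of 0] by (simp add: prepend_def)
  have agree: "u (j + t) = u t" if "t < M" for t
    using k[rule_format, of "Suc t"] that by (simp add: prepend_def j_def add.commute)
  have win: "t \<in> range e \<longleftrightarrow> j + t \<in> range e" if "t + L \<le> M" for t
  proof
    have ag: "\<forall>m<L. u (t + m) = u ((j + t) + m)"
      using agree that by (metis add.assoc add_less_cancel_left less_le_trans)
    show "t \<in> range e \<Longrightarrow> j + t \<in> range e" using rec[of t "j+t"] ag by blast
    show "j + t \<in> range e \<Longrightarrow> t \<in> range e" using rec[of "j+t" t] ag by metis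
  qed
  have e0: "e 0 = 0" by (simp add: e_def)
  have "j \<in> range e" using win[of 0] e0 unfolding M_def by (metis add_0 le_add2 rangeI add.commute)
  then obtain p where p: "e p = j" by blast
  have "p \<noteq> 0" using p e0 j_def by (metis nat.distinct(1))
  then obtain q where q: "p = Suc q" by (cases p) auto
  have blk: "\<tau> (u s) = map u [e s..<e (Suc s)]" for s
    unfolding e_def by (rule tau_block[OF fp ne])
  have eless: "e s < e (Suc s)" for s using sm by (simp add: strict_mono_less)
  have "last (\<tau> (u q)) = u (e (Suc q) - 1)"
    using blk[of q] eless[of q] by (simp add: last_map)
  then have lastc: "last (\<tau> (u q)) = c" using p q j_def ck by simp
  have epos: "s \<le> S \<Longrightarrow> e (p + s) = j + e s" for s
  proof (induction s)
    case 0 then show ?case using p e0 by simp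
  next
    case (Suc s)
    have IH: "e (p + s) = j + e s" using Suc by simp
    have le1: "e (Suc s) + L \<le> M" unfolding M_def using Suc.prems sm by (simp add: strict_mono_less_eq)
    have "j + e (Suc s) \<in> range e" using win[OF le1] by blast
    then obtain r where r: "e r = j + e (Suc s)" by (metis rangeE)
    have "e (p + s) < e r" using IH r eless[of s] by simp
    then have "p + s < r" using sm by (simp add: strict_mono_less)
    then have A: "e (Suc (p + s)) \<le> j + e (Suc s)" using r sm by (metis Suc_leI strict_mono_less_eq)
    define t where "t = e (Suc (p + s)) - j"
    have tj: "j + t = e (Suc (p + s))" using A IH eless[of "p+s"] unfolding t_def by simp
    have "t \<le> e (Suc s)" using A unfolding t_def by simp
    then have "t + L \<le> M" using le1 by simp
    then have "t \<in> range e" using win tj by (metis rangeI)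
    then obtain r' where r': "e r' = t" by (metis rangeE)
    have "e s < e r'" using r' tj IH eless[of "p+s"] by simp
    then have "s < r'" using sm by (simp add: strict_mono_less)
    then have "e (Suc s) \<le> t" using r' sm by (metis Suc_leI strict_mono_less_eq)
    then show ?case using tj \<open>t \<le> e (Suc s)\<close> by simp
  qed
  have useq: "u (p + s) = u s" if "s < S" for s
  proof -
    have e1: "e (p + s) = j + e s" using epos that by simp
    have e2: "e (Suc (p + s)) = j + e (Suc s)" using epos[of "Suc s"] that by simp
    have le1: "e (Suc s) \<le> M" unfolding M_def using that sm by (metis Suc_leI strict_mono_less_eq trans_le_add1)
    have "\<tau> (u (p + s)) = map u [j + e s..<j + e (Suc s)]" using blk[of "p+s"] e1 e2 by simp
    also have "\<dots> = map u [e s..<e (Suc s)]"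
    proof (rule nth_equalityI)
      show "length (map u [j + e s..<j + e (Suc s)]) = length (map u [e s..<e (Suc s)])" by simp
      fix i assume "i < length (map u [j + e s..<j + e (Suc s)])"
      then have i: "e s + i < e (Suc s)" by simp
      then have "u (j + (e s + i)) = u (e s + i)" using agree le1 by simp
      then show "map u [j + e s..<j + e (Suc s)] ! i = map u [e s..<e (Suc s)] ! i"
        using i by (simp add: add.assoc)
    qed
    also have "\<dots> = \<tau> (u s)" using blk by simp
    finally show ?thesis using injt by (simp add: inj_eq)
  qed
  have "\<forall>i<S. prepend (u q) u i = u (i + q)"
  proof (intro allI impI)
    fix i assume "i < S"
    then show "prepend (u q) u i = u (i + q)"
      using useq q by (cases i) (auto simp: prepend_def add.commute)
  qed
  then show ?thesis using lastc by blast
qed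

lemma desub:
  assumes ne: "\<forall>b. \<tau> b \<noteq> []" and fp: "fixed_point \<tau> u"
    and recL: "\<forall>i j. (\<forall>k<L. u (i + k) = u (j + k)) \<and> i \<in> cut_set \<tau> u \<longrightarrow> j \<in> cut_set \<tau> u"
    and injt: "inj \<tau>"
    and cX: "prepend c u \<in> X_tau u"
  shows "\<exists>b::'a::finite. prepend b u \<in> X_tau u \<and> last (\<tau> b) = c"
proof (rule ccontr)
  define Q where "Q = (\<lambda>b S. last (\<tau> b) = c \<and> (\<exists>q. \<forall>i<S. prepend b u i = u (i + q)))"
  assume "\<not> ?thesis"
  then have "\<forall>b. \<exists>S. \<not> Q b S" unfolding Q_def X_iff by blast
  then obtain Sb where Sb: "\<And>b. \<not> Q b (Sb b)" by metis
  define T where "T = Max (range Sb)"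
  obtain b q where bq: "last (\<tau> b) = c" "\<forall>i<T. prepend b u i = u (i + q)"
    using desub_S[OF ne fp recL injt cX, of T] by blast
  have "Sb b \<le> T" unfolding T_def by (simp add: Max_ge)
  then have "Q b (Sb b)" unfolding Q_def using bq by (meson less_le_trans)
  then show False using Sb by blast
qed


lemma sw_factor:
  assumes fp: "fixed_point \<tau> u" and ne: "\<forall>b. \<tau> b \<noteq> []"
    and w: "w \<in> seq_factors u"
  shows "subst_word \<tau> w \<in> seq_factors u"
proof -
  obtain i k where wik: "w = map u [i..<i+k]" using w unfolding seq_factors_def by blast
  define e where "e = cpos \<tau> u"
  have sm: "strict_mono e" unfolding e_def by (rule cpos_mono[OF ne])
  have le: "e i \<le> e (i + k)" using sm by (simp add: strict_mono_less_eq)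
  have "map u [0..<i+k] = map u [0..<i] @ w" using wik upt_split3[of 0 i "i+k"] by simp
  then have "subst_word \<tau> (map u [0..<i+k]) = subst_word \<tau> (map u [0..<i]) @ subst_word \<tau> w"
    by (simp add: sw_append)
  then have "map u [0..<e (i+k)] = map u [0..<e i] @ subst_word \<tau> w"
    using fp_prefix[OF fp ne] unfolding e_def by metis
  moreover have "map u [0..<e (i+k)] = map u [0..<e i] @ map u [e i..<e (i+k)]"
    using upt_split3[OF _ le, of 0] by simp
  ultimately have "subst_word \<tau> w = map u [e i..<e i + (e (i+k) - e i)]" using le by simp
  then show ?thesis unfolding seq_factors_def by blast
qed

lemma swpow_factor:
  assumes fp: "fixed_point \<tau> u" and ne: "\<forall>b. \<tau> b \<noteq> []"
    and w: "w \<in> seq_factors u"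
  shows "(subst_word \<tau> ^^ n) w \<in> seq_factors u"
  by (induction n) (auto simp: w sw_factor[OF fp ne])

lemma extract_pre:
  assumes eq: "x @ map u [0..<l] = map u [j..<j+k]" and x: "x \<noteq> []" and i: "i \<le> l"
  shows "prepend (last x) u i = u (i + (j + length x - 1))"
proof -
  have len: "length x + l = k" using arg_cong[OF eq, of length] by simp
  show ?thesis
  proof (cases i)
    case 0
    have "last x = x ! (length x - 1)" using x by (simp add: last_conv_nth)
    also have "\<dots> = (x @ map u [0..<l]) ! (length x - 1)" using x by (simp add: nth_append)
    also have "\<dots> = u (j + (length x - 1))"
    proof -
      have "length x - 1 < k" using x len by (cases x) auto
      then show ?thesis unfolding eq by simp
    qed
    moreover have "j + (length x - 1) = j + length x - 1" using x by (cases x) auto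
    ultimately show ?thesis using 0 by (simp add: prepend_def)
  next
    case (Suc t)
    then have t: "t < l" using i by simp
    have "u t = (x @ map u [0..<l]) ! (length x + t)" using t by (simp add: nth_append)
    also have "\<dots> = u (j + (length x + t))" unfolding eq using t len by simp
    finally have c1: "u t = u (j + (length x + t))" .
    have ar: "i + (j + length x - 1) = j + (length x + t)" using Suc x by (cases x) auto
    have "prepend (last x) u i = u t" using Suc by (simp add: prepend_def)
    then show ?thesis using ar c1 by simp
  qed
qed

lemma growth2:
  fixes \<tau> :: "'a::finite \<Rightarrow> 'a list"
  assumes ne: "\<forall>b. \<tau> b \<noteq> []" and prim: "primitive \<tau>" and fp: "fixed_point \<tau> u"
    and aper: "infinite (X_tau u)"
  shows "length (\<tau> (u 0)) \<ge> 2" and "hd (\<tau> (u 0)) = u 0"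
proof -
  have h0: "\<tau> (u 0) ! 0 = u 0"
    using fp_nth[OF fp ne, of 0 1] ne by simp
  then show "hd (\<tau> (u 0)) = u 0" using ne by (simp add: hd_conv_nth)
  show "length (\<tau> (u 0)) \<ge> 2"
  proof (rule ccontr)
    assume "\<not> ?thesis"
    moreover have "\<tau> (u 0) \<noteq> []" using ne by blast
    ultimately have "length (\<tau> (u 0)) = 1" by (cases "\<tau> (u 0)") (auto simp: Suc_le_eq)
    then have t1: "\<tau> (u 0) = [u 0]" using h0 by (cases "\<tau> (u 0)") auto
    have pw: "(subst_word \<tau> ^^ n) [u 0] = [u 0]" for n
      by (induction n) (auto simp: t1)
    obtain n where n: "\<forall>a b. b \<in> set (subst_pow \<tau> n a)"
      using prim unfolding primitive_def by blast
    have allb: "b = u 0" for b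
    proof -
      have "b \<in> set ((subst_word \<tau> ^^ n) [u 0])" using n unfolding subst_pow_def by blast
      then show ?thesis using pw by simp
    qed
    have "X_tau u \<subseteq> {\<lambda>_. u 0}" using allb by auto
    then have "finite (X_tau u)" using finite_subset by blast
    then show False using aper by blast
  qed
qed

lemma pow_prefix:
  assumes ne: "\<forall>b. \<tau> b \<noteq> []" and fp: "fixed_point \<tau> u"
  shows "(subst_word \<tau> ^^ n) [u 0] = map u [0..<length ((subst_word \<tau> ^^ n) [u 0])]"
proof (induction n)
  case 0 then show ?case by simp
next
  case (Suc n)
  have "(subst_word \<tau> ^^ Suc n) [u 0] = subst_word \<tau> ((subst_word \<tau> ^^ n) [u 0])" by simp
  also have "\<dots> = subst_word \<tau> (map u [0..<length ((subst_word \<tau> ^^ n) [u 0])])" using Suc by metis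
  also have "\<dots> = map u [0..<cpos \<tau> u (length ((subst_word \<tau> ^^ n) [u 0]))]"
    by (rule fp_prefix[OF fp ne])
  finally show ?case by simp
qed

lemma pow_len:
  fixes \<tau> :: "'a::finite \<Rightarrow> 'a list"
  assumes ne: "\<forall>b. \<tau> b \<noteq> []" and prim: "primitive \<tau>" and fp: "fixed_point \<tau> u"
    and aper: "infinite (X_tau u)"
  shows "length ((subst_word \<tau> ^^ n) [u 0]) \<ge> Suc n"
proof (induction n)
  case 0 then show ?case by simp
next
  case (Suc n)
  obtain y where y: "\<tau> (u 0) = [u 0] @ y" "y \<noteq> []"
  proof -
    have l2: "length (\<tau> (u 0)) \<ge> 2" and hd: "hd (\<tau> (u 0)) = u 0"
      using growth2[OF ne prim fp aper] by auto
    have "\<tau> (u 0) = [u 0] @ tl (\<tau> (u 0))" using hd l2 by (cases "\<tau> (u 0)") auto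
    moreover have "tl (\<tau> (u 0)) \<noteq> []" using l2 by (cases "\<tau> (u 0)") auto
    ultimately show ?thesis using that by blast
  qed
  have "(subst_word \<tau> ^^ Suc n) [u 0] = (subst_word \<tau> ^^ n) (\<tau> (u 0))"
    by (simp only: funpow_Suc_right comp_def sw_single)
  also have "\<dots> = (subst_word \<tau> ^^ n) [u 0] @ (subst_word \<tau> ^^ n) y"
    unfolding y(1) by (rule swpow_append)
  finally have "length ((subst_word \<tau> ^^ Suc n) [u 0]) = length ((subst_word \<tau> ^^ n) [u 0]) + length ((subst_word \<tau> ^^ n) y)"
    by simp
  moreover have "length ((subst_word \<tau> ^^ n) y) \<ge> 1"
  proof -
    have "length ((subst_word \<tau> ^^ n) y) \<ge> length y" by (rule swpow_len[OF ne])
    moreover have "length y \<ge> 1" using y(2) by (cases y) auto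
    ultimately show ?thesis by linarith
  qed
  ultimately show ?case using Suc by simp
qed


lemma fwd:
  fixes \<tau> :: "'a::finite \<Rightarrow> 'a list"
  assumes ne: "\<forall>b. \<tau> b \<noteq> []" and fp: "fixed_point \<tau> u"
    and gen: "generating_fixed_point \<tau> u"
    and recog: "unilaterally_recognizable \<tau> u"
    and injt: "inj \<tau>"
    and aX: "prepend a u \<in> X_tau u"
  shows "\<exists>cyc. suffix_cycle \<tau> cyc \<and> a \<in> set cyc \<and> (\<exists>i<length cyc. [cyc ! i, u 0] \<in> lang \<tau>)"
proof -
  obtain L where recL: "\<forall>i j. (\<forall>k<L. u (i + k) = u (j + k)) \<and> i \<in> cut_set \<tau> u \<longrightarrow> j \<in> cut_set \<tau> u"
    using recog unfolding unilaterally_recognizable_def by blast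
  define P where "P = {c. prepend c u \<in> X_tau u}"
  define f where "f = (\<lambda>b. last (\<tau> b))"
  have pre: "\<exists>b. b \<in> P \<and> f b = c" if "c \<in> P" for c
    using desub[OF ne fp recL injt, of c] that unfolding P_def f_def by blast
  define g where "g = (\<lambda>c. SOME b. b \<in> P \<and> f b = c)"
  have g: "g c \<in> P \<and> f (g c) = c" if "c \<in> P" for c
    unfolding g_def using someI_ex[OF pre[OF that]] .
  define cs where "cs = (\<lambda>n. (g ^^ n) a)"
  have aP: "a \<in> P" using aX unfolding P_def by simp
  have csP: "cs n \<in> P" for n
    by (induction n) (auto simp: cs_def aP g)
  have backf: "(f ^^ s) (cs (s + d)) = cs d" for s d
  proof (induction s)
    case 0 then show ?case by simp
  next
    case (Suc s)
    have "cs (Suc s + d) = g (cs (s + d))" by (simp add: cs_def)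
    then have "f (cs (Suc s + d)) = cs (s + d)" using g[OF csP] by simp
    moreover have "(f ^^ Suc s) (cs (Suc s + d)) = (f ^^ s) (f (cs (Suc s + d)))"
      by (simp only: funpow_Suc_right comp_def)
    ultimately show ?case using Suc by simp
  qed
  have "\<not> inj cs"
  proof
    assume "inj cs"
    then have "finite (UNIV :: nat set)" using finite_imageD[of cs UNIV] by simp
    then show False by simp
  qed
  then obtain s t where st: "s \<noteq> t" "cs s = cs t" unfolding inj_def by blast
  obtain s m where sm: "m \<ge> 1" "cs s = cs (s + m)"
  proof (cases "s < t")
    case True then show ?thesis using that[of "t - s" s] st by simp
  next
    case False then show ?thesis using that[of "s - t" t] st by simp
  qed
  have a0: "cs 0 = a" by (simp add: cs_def)
  have am: "cs m = a" using backf[of s 0] backf[of s m] sm a0 by (simp add: add.commute)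
  have fm: "(f ^^ m) a = a" using backf[of m 0] am a0 by simp
  define cyc where "cyc = map (\<lambda>i. (f ^^ i) a) [0..<m]"
  have lc: "length cyc = m" by (simp add: cyc_def)
  have sc: "suffix_cycle \<tau> cyc"
    unfolding suffix_cycle_def
  proof (intro conjI allI impI)
    show "cyc \<noteq> []" using sm by (simp add: cyc_def)
    fix i assume "Suc i < length cyc"
    then show "last (\<tau> (cyc ! i)) = cyc ! Suc i" by (simp add: cyc_def f_def)
  next
    have "last cyc = (f ^^ (m - 1)) a" using sm by (simp add: cyc_def last_map)
    then have "f (last cyc) = (f ^^ m) a" using sm
      by (metis Suc_diff_1 comp_apply funpow.simps(2) less_le_trans zero_less_one)
    then show "last (\<tau> (last cyc)) = hd cyc" using fm sm by (simp add: f_def hd_map cyc_def)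
  qed
  have "[a, u 0] \<in> seq_factors u"
  proof -
    obtain k where k: "\<forall>i<2. prepend a u i = u (i + k)" using aX unfolding X_iff by blast
    have "[a, u 0] = map u [k..<k+2]"
      using k[rule_format, of 0] k[rule_format, of 1] by (simp add: prepend_def upt_rec)
    then show ?thesis unfolding seq_factors_def by (intro CollectI exI[of _ k] exI[of _ 2]) simp
  qed
  then have "[cyc ! 0, u 0] \<in> lang \<tau>" using gen sm unfolding generating_fixed_point_def
    by (simp add: cyc_def)
  moreover have "a \<in> set cyc"
  proof -
    have c0: "cyc ! 0 = a" using sm by (simp add: cyc_def)
    have "0 < length cyc" using lc sm by simp
    then show ?thesis using c0 nth_mem by metis
  qed
  ultimately show ?thesis using sc lc sm by (metis less_le_trans zero_less_one)
qed


lemma bwd: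
  fixes \<tau> :: "'a::finite \<Rightarrow> 'a list"
  assumes ne: "\<forall>b. \<tau> b \<noteq> []" and prim: "primitive \<tau>" and fp: "fixed_point \<tau> u"
    and gen: "generating_fixed_point \<tau> u" and aper: "infinite (X_tau u)"
    and sc: "suffix_cycle \<tau> cyc" and acyc: "a \<in> set cyc" and il: "i < length cyc"
    and lg: "[cyc ! i, u 0] \<in> lang \<tau>"
  shows "prepend a u \<in> X_tau u"
proof -
  define f where "f = (\<lambda>b. last (\<tau> b))"
  define m where "m = length cyc"
  define h where "h = hd cyc"
  have cne: "cyc \<noteq> []" using sc unfolding suffix_cycle_def by blast
  have m0: "m \<ge> 1" using cne unfolding m_def by (cases cyc) auto
  have cycn: "j < m \<Longrightarrow> cyc ! j = (f ^^ j) h" for j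
  proof (induction j)
    case 0 then show ?case using cne by (simp add: h_def hd_conv_nth)
  next
    case (Suc j)
    have "last (\<tau> (cyc ! j)) = cyc ! Suc j"
      using sc Suc.prems unfolding suffix_cycle_def m_def by blast
    moreover have "cyc ! j = (f ^^ j) h" using Suc by simp
    ultimately show ?case by (simp add: f_def)
  qed
  have fmh: "(f ^^ m) h = h"
  proof -
    have mm: "m = Suc (m - 1)" using m0 by simp
    have "(f ^^ m) h = f ((f ^^ (m - 1)) h)" by (subst mm) simp
    also have "\<dots> = f (cyc ! (m - 1))" using cycn[of "m - 1"] m0 by simp
    also have "\<dots> = f (last cyc)" using cne by (simp add: last_conv_nth m_def)
    also have "\<dots> = h" using sc unfolding suffix_cycle_def f_def h_def by simp
    finally show ?thesis .
  qed
  have fNm: "(f ^^ (N * m)) h = h" for N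
  proof (induction N)
    case 0 then show ?case by simp
  next
    case (Suc N)
    have "(f ^^ (Suc N * m)) h = (f ^^ m) ((f ^^ (N * m)) h)" by (simp add: funpow_add)
    then show ?case using Suc fmh by simp
  qed
  obtain j0 where j0: "j0 < m" "cyc ! j0 = a" using acyc unfolding m_def by (metis in_set_conv_nth)
  define c where "c = cyc ! i"
  have ch: "c = (f ^^ i) h" using cycn il unfolding c_def m_def by simp
  have fn: "(f ^^ (j0 + N * m + (m - i))) c = a" for N
  proof -
    have "(f ^^ (m - i)) c = (f ^^ (m - i + i)) h" unfolding ch by (simp add: funpow_add)
    also have "\<dots> = h" using il fmh unfolding m_def by simp
    finally have "(f ^^ (m - i)) c = h" .
    then have "(f ^^ (j0 + N * m + (m - i))) c = (f ^^ j0) ((f ^^ (N * m)) h)"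
      by (simp add: funpow_add)
    then show ?thesis using fNm j0 cycn by simp
  qed
  have wf: "[c, u 0] \<in> seq_factors u" using lg gen unfolding generating_fixed_point_def c_def by simp
  show ?thesis unfolding X_iff
  proof
    fix N
    define n where "n = j0 + N * m + (m - i)"
    have nN: "N \<le> n" unfolding n_def using m0 by (metis le_add1 mult_le_mono2 nat_mult_1_right le_add2 order_trans add.commute)
    define x where "x = (subst_word \<tau> ^^ n) [c]"
    define l where "l = length ((subst_word \<tau> ^^ n) [u 0])"
    have ln: "l \<ge> Suc n" unfolding l_def by (rule pow_len[OF ne prim fp aper])
    have xne: "x \<noteq> []" and lx: "last x = a"
      using swpow_last[OF ne, of n c] fn[of N] unfolding x_def n_def f_def by auto
    have "(subst_word \<tau> ^^ n) ([c] @ [u 0]) \<in> seq_factors u"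
      using swpow_factor[OF fp ne] wf by simp
    then have "x @ map u [0..<l] \<in> seq_factors u"
      unfolding x_def l_def swpow_append using pow_prefix[OF ne fp, of n] by metis
    then obtain j k where jk: "x @ map u [0..<l] = map u [j..<j + k]"
      unfolding seq_factors_def by blast
    have "\<forall>i'<N. prepend a u i' = u (i' + (j + length x - 1))"
    proof (intro allI impI)
      fix i' assume "i' < N"
      then have "i' \<le> l" using nN ln by simp
      then show "prepend a u i' = u (i' + (j + length x - 1))"
        using extract_pre[OF jk xne] lx by metis
    qed
    then show "\<exists>k. \<forall>i'<N. prepend a u i' = u (i' + k)" by blast
  qed
qed

theorem proposition4:
  fixes \<tau> :: "'a::finite \<Rightarrow> 'a list" and u :: "nat \<Rightarrow> 'a" and a :: 'a
  assumes nonempty: "\<forall>b. \<tau> b \<noteq> []"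
    and prim: "primitive \<tau>"
    and gen: "generating_fixed_point \<tau> u"
    and aper: "infinite (X_tau u)"
    and recog: "unilaterally_recognizable \<tau> u"
    and inj_pow: "\<forall>n\<ge>1. inj (subst_pow \<tau> n)"
  shows "prepend a u \<in> X_tau u \<longleftrightarrow>
           (\<exists>cyc. suffix_cycle \<tau> cyc \<and> a \<in> set cyc \<and>
                  (\<exists>i<length cyc. [cyc ! i, u 0] \<in> lang \<tau>))"
proof
  have fp: "fixed_point \<tau> u" using gen unfolding generating_fixed_point_def by blast
  have "subst_pow \<tau> 1 = \<tau>" by (rule ext) (simp add: subst_pow_def)
  then have injt: "inj \<tau>" using inj_pow by (metis order_refl)
  show "prepend a u \<in> X_tau u \<Longrightarrow> \<exists>cyc. suffix_cycle \<tau> cyc \<and> a \<in> set cyc \<and> (\<exists>i<length cyc. [cyc ! i, u 0] \<in> lang \<tau>)"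
    using fwd[OF nonempty fp gen recog injt] by blast
  show "\<exists>cyc. suffix_cycle \<tau> cyc \<and> a \<in> set cyc \<and> (\<exists>i<length cyc. [cyc ! i, u 0] \<in> lang \<tau>) \<Longrightarrow> prepend a u \<in> X_tau u"
    using bwd[OF nonempty prim fp gen aper] by blast
qed

end
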